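(* Let $G=(V,E)$ be a finite simple undirected graph with at least $2$ vertices. Then there exists a vertex $u\in V$ such that $C(G[V\setminus\{u\}])\le C(G)$.
   Context: For a vertex $u$ of a graph, $d_u$ is its degree and $T(u)$ the number of triangles containing $u$; the local clustering coefficient is $C(u)=\frac{2T(u)}{d_u(d_u-1)}$ if $d_u>1$ and $C(u)=0$ otherwise. The average clustering coefficient of a graph $H$ with $n\ge1$ vertices is $C(H)=\frac1n\sum_{u\in V(H)}C(u)$ (local coefficients computed in $H$). $G[S]$ denotes the subgraph induced by $S$. *)

theory Defs
  imports Main Complex_Main
begin

definition simple_graph :: "'a set \<Rightarrow> ('a \<Rightarrow> 'a \<Rightarrow> bool) \<Rightarrow> bool" where
  "simple_graph V E \<longleftrightarrow> finite V \<and> (\<forall>x y. E x y \<longrightarrow> x \<in> V \<and> y \<in> V)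
     \<and> (\<forall>x y. E x y \<longrightarrow> E y x) \<and> (\<forall>x. \<not> E x x)"

text \<open>All quantities below are computed in the induced subgraph G[S] of (V,E), i.e.
  in the graph with vertex set S and edges E restricted to S.\<close>

definition nbrs :: "'a set \<Rightarrow> ('a \<Rightarrow> 'a \<Rightarrow> bool) \<Rightarrow> 'a \<Rightarrow> 'a set" where
  "nbrs S E u = {v \<in> S. E u v}"

definition degree :: "'a set \<Rightarrow> ('a \<Rightarrow> 'a \<Rightarrow> bool) \<Rightarrow> 'a \<Rightarrow> nat" where
  "degree S E u = card (nbrs S E u)"

definition triangles :: "'a set \<Rightarrow> ('a \<Rightarrow> 'a \<Rightarrow> bool) \<Rightarrow> 'a \<Rightarrow> nat" where
  "triangles S E u = card {{v, w} | v w. v \<in> nbrs S E u \<and> w \<in> nbrs S E u \<and> E v w}"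

definition local_clustering :: "'a set \<Rightarrow> ('a \<Rightarrow> 'a \<Rightarrow> bool) \<Rightarrow> 'a \<Rightarrow> real" where
  "local_clustering S E u =
     (if degree S E u > 1
      then 2 * real (triangles S E u) / (real (degree S E u) * (real (degree S E u) - 1))
      else 0)"

definition avg_clustering :: "'a set \<Rightarrow> ('a \<Rightarrow> 'a \<Rightarrow> bool) \<Rightarrow> real" where
  "avg_clustering S E = (\<Sum>u\<in>S. local_clustering S E u) / real (card S)"

end

theory Submission
  imports Defs
begin

lemma ne_set[simp]: "A \<inter> {x. x \<noteq> u} = A - {u}" "A \<inter> {x. u \<noteq> x} = A - {u}"
  by auto

lemma ne_set2[simp]: "A \<inter> {x. x \<notin> B} = A - B" by auto

lemma arith_help:
  fixes x T :: real assumes "x > 2"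
  shows "2 * T * (x - 2) / ((x - 1) * ((x - 1) - 1)) = x * (2 * T / (x * (x - 1)))"
proof -
  have "x - 2 \<noteq> 0" "x - 1 \<noteq> 0" "x \<noteq> 0" using assms by auto
  then show ?thesis by (simp add: divide_simps)
qed

lemma lc_nonneg: "local_clustering S E v \<ge> 0"
  unfolding local_clustering_def by auto

lemma nbrs_remove: "nbrs (V - {x}) E v = nbrs V E v - {x}"
  unfolding nbrs_def by auto

definition pairs where
  "pairs S E v = {{a, b} | a b. a \<in> nbrs S E v \<and> b \<in> nbrs S E v \<and> E a b}"

lemma tri_pairs: "triangles S E v = card (pairs S E v)"
  unfolding triangles_def pairs_def by simp

lemma pairs_remove: "pairs (V - {x}) E v = {p \<in> pairs V E v. x \<notin> p}"
  unfolding pairs_def nbrs_remove by auto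

lemma pairs_sub:
  assumes "\<forall>x. \<not> E x x" "p \<in> pairs V E v"
  shows "p \<subseteq> nbrs V E v" "card p = 2"
  using assms unfolding pairs_def by (auto simp: card_insert_if)

lemma finite_nbrs: "finite V \<Longrightarrow> finite (nbrs V E v)"
  unfolding nbrs_def by simp

lemma finite_pairs:
  assumes "finite V" shows "finite (pairs V E v)"
proof -
  have "pairs V E v \<subseteq> Pow (nbrs V E v)" unfolding pairs_def by auto
  then show ?thesis using finite_nbrs[OF assms] by (meson finite_Pow_iff finite_subset)
qed

lemma sum_tri:
  assumes "finite V" "\<forall>x. \<not> E x x"
  shows "(\<Sum>x\<in>nbrs V E v. triangles (V - {x}) E v)
        = triangles V E v * (degree V E v - 2)"
proof -
  let ?N = "nbrs V E v" and ?P = "pairs V E v"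
  have fN: "finite ?N" and fP: "finite ?P" using finite_nbrs[OF assms(1)] finite_pairs[OF assms(1)] by auto
  have "(\<Sum>x\<in>?N. triangles (V - {x}) E v) = (\<Sum>x\<in>?N. \<Sum>p\<in>?P. if x \<notin> p then 1 else 0)"
    unfolding tri_pairs pairs_remove using fP
    by (auto simp: sum.If_cases intro!: sum.cong arg_cong[where f=card])
  also have "\<dots> = (\<Sum>p\<in>?P. \<Sum>x\<in>?N. if x \<notin> p then 1 else 0)"
    by (rule sum.swap)
  also have "\<dots> = (\<Sum>p\<in>?P. degree V E v - 2)"
  proof (rule sum.cong[OF refl])
    fix p assume p: "p \<in> ?P"
    have s: "p \<subseteq> ?N" "card p = 2" using pairs_sub[OF assms(2) p] by auto
    have "(\<Sum>x\<in>?N. if x \<notin> p then 1 else 0) = card (?N - p)"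
      using fN by (simp add: sum.If_cases)
    also have "\<dots> = degree V E v - 2"
      using s fN unfolding degree_def by (simp add: card_Diff_subset finite_subset)
    finally show "(\<Sum>x\<in>?N. if x \<notin> p then 1 else 0) = degree V E v - 2" .
  qed
  also have "\<dots> = triangles V E v * (degree V E v - 2)"
    by (simp add: tri_pairs)
  finally show ?thesis .
qed

lemma nbr_part:
  assumes "simple_graph V E"
  shows "(\<Sum>x\<in>nbrs V E v. local_clustering (V - {x}) E v)
         \<le> real (degree V E v) * local_clustering V E v"
proof (cases "degree V E v \<ge> 3")
  case False
  have "local_clustering (V - {x}) E v = 0" if "x \<in> nbrs V E v" for x
  proof -
    have f: "finite (nbrs V E v)" using assms finite_nbrs unfolding simple_graph_def by auto
    have "degree (V - {x}) E v = degree V E v - 1"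
      unfolding degree_def nbrs_remove using that f by simp
    then show ?thesis using False unfolding local_clustering_def by auto
  qed
  then show ?thesis using lc_nonneg[of V E v] by simp
next
  case True
  let ?d = "degree V E v" and ?T = "triangles V E v"
  have fV: "finite V" and irr: "\<forall>x. \<not> E x x" using assms unfolding simple_graph_def by auto
  have f: "finite (nbrs V E v)" using finite_nbrs[OF fV] by auto
  have deg: "degree (V - {x}) E v = ?d - 1" if "x \<in> nbrs V E v" for x
    unfolding degree_def nbrs_remove using that f by simp
  have "(\<Sum>x\<in>nbrs V E v. local_clustering (V - {x}) E v)
      = (\<Sum>x\<in>nbrs V E v. 2 * real (triangles (V - {x}) E v) / (real (?d - 1) * (real (?d - 1) - 1)))"
    apply (rule sum.cong[OF refl])
    using True deg unfolding local_clustering_def by auto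
  also have "\<dots> = 2 * real (\<Sum>x\<in>nbrs V E v. triangles (V - {x}) E v) / (real (?d - 1) * (real (?d - 1) - 1))"
    by (simp add: sum_divide_distrib sum_distrib_left)
  also have "\<dots> = 2 * real (?T * (?d - 2)) / (real (?d - 1) * (real (?d - 1) - 1))"
    using sum_tri[of V E v, OF fV irr] by simp
  also have "\<dots> = real ?d * local_clustering V E v"
  proof -
    have a: "real (?d - 1) = real ?d - 1" "real (?d - 2) = real ?d - 2" using True by auto
    have b: "real ?d - 2 > 0" using True by auto
    have "2 * real ?T * (real ?d - 2) / ((real ?d - 1) * ((real ?d - 1) - 1)) = real ?d * (2 * real ?T / (real ?d * (real ?d - 1)))"
      using b by (intro arith_help) simp
    then show ?thesis unfolding local_clustering_def using True a
      by (simp add: mult.assoc)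
  qed
  finally show ?thesis by simp
qed

lemma local_lemma:
  assumes "simple_graph V E" "v \<in> V"
  shows "(\<Sum>u\<in>V - {v}. local_clustering (V - {u}) E v) \<le> real (card V - 1) * local_clustering V E v"
proof -
  let ?N = "nbrs V E v"
  have fV: "finite V" and irr: "\<forall>x. \<not> E x x" using assms unfolding simple_graph_def by auto
  have NV: "?N \<subseteq> V - {v}" using irr unfolding nbrs_def by auto
  have fin: "finite (V - {v})" using fV by simp
  have split: "(\<Sum>u\<in>V - {v}. local_clustering (V - {u}) E v)
     = (\<Sum>u\<in>?N. local_clustering (V - {u}) E v) + (\<Sum>u\<in>(V - {v}) - ?N. local_clustering (V - {u}) E v)"
    using sum.subset_diff[OF NV fin] by (metis add.commute)
  have nn: "(\<Sum>u\<in>(V - {v}) - ?N. local_clustering (V - {u}) E v)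
      = real (card ((V - {v}) - ?N)) * local_clustering V E v"
  proof -
    have "local_clustering (V - {u}) E v = local_clustering V E v" if "u \<in> (V - {v}) - ?N" for u
    proof -
      have "nbrs (V - {u}) E v = ?N" unfolding nbrs_remove using that by auto
      then show ?thesis unfolding local_clustering_def degree_def triangles_def by simp
    qed
    then show ?thesis by simp
  qed
  have c: "card ((V - {v}) - ?N) = card V - 1 - degree V E v"
    unfolding degree_def using NV fin card_Diff_subset[of ?N "V - {v}"] finite_subset[OF NV fin]
      assms(2) fV by simp
  have dle: "degree V E v \<le> card V - 1"
    unfolding degree_def using card_mono[OF fin NV] assms(2) fV by simp
  have "(\<Sum>u\<in>V - {v}. local_clustering (V - {u}) E v)
      \<le> real (degree V E v) * local_clustering V E v + real (card V - 1 - degree V E v) * local_clustering V E v"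
    using split nn c nbr_part[OF assms(1), of v] by simp
  also have "\<dots> = real (card V - 1) * local_clustering V E v"
  proof -
    have e: "real (degree V E v) + real (card V - 1 - degree V E v) = real (card V - 1)"
      using dle by linarith
    have "(real (degree V E v) + real (card V - 1 - degree V E v)) * local_clustering V E v
        = real (card V - 1) * local_clustering V E v" by (simp only: e)
    then show ?thesis by (simp only: distrib_right)
  qed
  finally show ?thesis .
qed

theorem mainTheorem7:
  fixes V :: "'a set" and E :: "'a \<Rightarrow> 'a \<Rightarrow> bool"
  assumes "simple_graph V E" and "card V \<ge> 2"
  shows "\<exists>u\<in>V. avg_clustering (V - {u}) E \<le> avg_clustering V E"
proof (rule ccontr)
  assume H: "\<not> ?thesis"
  have fV: "finite V" using assms unfolding simple_graph_def by auto
  define n where "n = card V"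
  have n2: "real n \<ge> 2" using assms(2) n_def by simp
  have ne: "V \<noteq> {}" using assms(2) by auto
  have cu: "card (V - {u}) = n - 1" if "u \<in> V" for u using that fV n_def by simp
  have rn: "real (n - 1) = real n - 1" using assms(2) n_def by simp
  let ?L = "\<lambda>S v. local_clustering S E v"
  have "(\<Sum>u\<in>V. avg_clustering V E) < (\<Sum>u\<in>V. avg_clustering (V - {u}) E)"
    using H fV ne by (intro sum_strict_mono) auto
  also have "\<dots> = (\<Sum>u\<in>V. \<Sum>v\<in>V - {u}. ?L (V - {u}) v) / real (n - 1)"
    unfolding avg_clustering_def using cu by (simp add: sum_divide_distrib)
  also have "(\<Sum>u\<in>V. \<Sum>v\<in>V - {u}. ?L (V - {u}) v) = (\<Sum>v\<in>V. \<Sum>u\<in>V - {v}. ?L (V - {u}) v)"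
  proof -
    have "(\<Sum>u\<in>V. \<Sum>v\<in>V - {u}. ?L (V - {u}) v) = (\<Sum>u\<in>V. \<Sum>v\<in>V. if v \<noteq> u then ?L (V - {u}) v else 0)"
      using fV by (simp add: sum.If_cases)
    also have "\<dots> = (\<Sum>v\<in>V. \<Sum>u\<in>V. if v \<noteq> u then ?L (V - {u}) v else 0)"
      by (rule sum.swap)
    also have "\<dots> = (\<Sum>v\<in>V. \<Sum>u\<in>V - {v}. ?L (V - {u}) v)"
      using fV by (simp add: sum.If_cases)
    finally show ?thesis .
  qed
  also have "(\<Sum>v\<in>V. \<Sum>u\<in>V - {v}. ?L (V - {u}) v) / real (n - 1)
      \<le> (\<Sum>v\<in>V. real (n - 1) * ?L V v) / real (n - 1)"
    using local_lemma[OF assms(1)] n_def n2 rn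
    by (intro divide_right_mono sum_mono) auto
  also have "\<dots> = (\<Sum>u\<in>V. avg_clustering V E)"
    unfolding avg_clustering_def using n2 rn
    by (simp add: n_def sum_distrib_left[symmetric])
  finally show False by simp
qed

end
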